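(* Let $f:[0,1]\to[0,1]$ be a surjective continuous function. If $f$ admits a splitting sequence, then there exist a nondegenerate continuum $C\subseteq\varprojlim f$ and a sequence $(C_n)_{n\in\mathbb N}$ of nondegenerate continua $C_n\subseteq\varprojlim f$ with $C_n\neq C$ for all $n$, such that $C_n\to C$ in the Hausdorff metric.
   Context: $\varprojlim f=\{\mathbf x=(x_0,x_1,\dots)\in[0,1]^{\mathbb N}: f(x_{n+1})=x_n\ \forall n\}$ with the topology inherited from the product topology (a compact metric space; the Hausdorff metric is taken with respect to a compatible metric). A sequence $(T_n)_{n\in\mathbb N}$ of closed intervals $T_n\subsetneq[0,1]$ (possibly degenerate) is tight if $f(T_{n+1})=T_n$ for every $n$ and $T_n$ is nondegenerate for all sufficiently large $n$. A tight sequence $(T_n)$, $T_n=[l_n,r_n]$, is a splitting sequence admitted by $f$ if there are an infinite set $N\subseteq\mathbb N$ and nondegenerate closed intervals $S_n\subseteq[0,1]$ ($n\in N$) with $S_n\cap T_n\subseteq\{l_n,r_n\}$ and $f(S_n)=f(T_n)$ for all $n\in N$. *)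

theory Defs
  imports "HOL-Analysis.Analysis"
begin

text \<open>The inverse limit of f on [0,1], as a subset of nat => real, which carries the
product topology (Function_Topology) and a compatible metric (Function_Metric).\<close>
definition inv_lim :: "(real \<Rightarrow> real) \<Rightarrow> (nat \<Rightarrow> real) set" where
  "inv_lim f = {x. (\<forall>n. x n \<in> {0..1}) \<and> (\<forall>n. f (x (Suc n)) = x n)}"

definition tight_seq :: "(real \<Rightarrow> real) \<Rightarrow> (nat \<Rightarrow> real) \<Rightarrow> (nat \<Rightarrow> real) \<Rightarrow> bool" where
  "tight_seq f l r \<longleftrightarrow>
     (\<forall>n. 0 \<le> l n \<and> l n \<le> r n \<and> r n \<le> 1 \<and> {l n..r n} \<noteq> {0..1}) \<and>
     (\<forall>n. f ` {l (Suc n)..r (Suc n)} = {l n..r n}) \<and>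
     (\<exists>N. \<forall>n\<ge>N. l n < r n)"

definition splitting_seq :: "(real \<Rightarrow> real) \<Rightarrow> (nat \<Rightarrow> real) \<Rightarrow> (nat \<Rightarrow> real) \<Rightarrow> bool" where
  "splitting_seq f l r \<longleftrightarrow> tight_seq f l r \<and>
     (\<exists>N :: nat set. infinite N \<and> (\<exists>a b :: nat \<Rightarrow> real. \<forall>n\<in>N.
        0 \<le> a n \<and> a n < b n \<and> b n \<le> 1 \<and>
        {a n..b n} \<inter> {l n..r n} \<subseteq> {l n, r n} \<and>
        f ` {a n..b n} = f ` {l n..r n}))"

definition admits_splitting :: "(real \<Rightarrow> real) \<Rightarrow> bool" where
  "admits_splitting f \<longleftrightarrow> (\<exists>l r. splitting_seq f l r)"

definition continuum :: "'a::topological_space set \<Rightarrow> bool" where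
  "continuum C \<longleftrightarrow> C \<noteq> {} \<and> compact C \<and> connected C"

definition nondegenerate :: "'a set \<Rightarrow> bool" where
  "nondegenerate C \<longleftrightarrow> (\<exists>x\<in>C. \<exists>y\<in>C. x \<noteq> y)"

definition hausdist :: "'a::metric_space set \<Rightarrow> 'a set \<Rightarrow> real" where
  "hausdist S T =
    (if S \<noteq> {} \<and> T \<noteq> {} \<and> bounded S \<and> bounded T
     then max (SUP x\<in>S. infdist x T) (SUP y\<in>T. infdist y S) else 0)"

end

theory Submission
  imports Defs
begin


lemma nested_connected:
  fixes K :: "nat \<Rightarrow> 'a::metric_space set"
  assumes comp: "\<And>M. compact (K M)" and conn: "\<And>M. connected (K M)"
    and dec: "\<And>M. K (Suc M) \<subseteq> K M"
  shows "connected (\<Inter>(range K))"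
proof -
  have mono: "K n \<subseteq> K m" if "m \<le> n" for m n
    using lift_Suc_antimono_le[of K, OF dec that] .
  let ?X = "\<Inter>(range K)"
  have cX: "closed ?X" using comp compact_imp_closed by blast
  show ?thesis
  proof (subst connected_closed_set[OF cX], rule notI, elim exE conjE)
    fix A B assume cA: "closed A" and cB: "closed B" and nA: "A \<noteq> {}" and nB: "B \<noteq> {}"
      and AB: "A \<union> B = ?X" and ABd: "A \<inter> B = {}"
    define U where "U = {x. infdist x A < infdist x B}"
    define V where "V = {x. infdist x B < infdist x A}"
    have oU: "open U" unfolding U_def
      by (intro open_Collect_less continuous_intros)
    have oV: "open V" unfolding V_def
      by (intro open_Collect_less continuous_intros)
    have AU: "A \<subseteq> U"
    proof
      fix x assume "x \<in> A"
      then have "x \<notin> B" using ABd by auto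
      then have "infdist x B \<noteq> 0" using in_closed_iff_infdist_zero[OF cB nB] by auto
      moreover have "infdist x A = 0" using \<open>x \<in> A\<close> in_closed_iff_infdist_zero[OF cA nA] by auto
      ultimately show "x \<in> U" unfolding U_def using infdist_nonneg[of x B] by auto
    qed
    have BV: "B \<subseteq> V"
    proof
      fix x assume "x \<in> B"
      then have "x \<notin> A" using ABd by auto
      then have "infdist x A \<noteq> 0" using in_closed_iff_infdist_zero[OF cA nA] by auto
      moreover have "infdist x B = 0" using \<open>x \<in> B\<close> in_closed_iff_infdist_zero[OF cB nB] by auto
      ultimately show "x \<in> V" unfolding V_def using infdist_nonneg[of x A] by auto
    qed
    have UV: "U \<inter> V = {}" unfolding U_def V_def by auto
    have "K 0 \<inter> (\<Inter>M\<in>UNIV. K M - (U \<union> V)) = {}"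
      using AB AU BV by blast
    then obtain F where fF: "finite F" and F: "K 0 \<inter> (\<Inter>M\<in>F. K M - (U \<union> V)) = {}"
      using compact_imp_fip_image[OF comp[of 0], of UNIV "\<lambda>M. K M - (U \<union> V)"]
        comp compact_imp_closed oU oV by blast
    define M where "M = Max (insert 0 F)"
    have "K M \<subseteq> K m" if "m \<in> insert 0 F" for m
      using mono[of m M] that fF unfolding M_def by auto
    then have KM: "K M \<subseteq> U \<union> V" using F by blast
    obtain a where "a \<in> A" using nA by auto
    then have "a \<in> U \<inter> K M" using AU AB by blast
    moreover obtain b where "b \<in> B" using nB by auto
    then have "b \<in> V \<inter> K M" using BV AB by blast
    ultimately show False
      using connectedD[OF conn[of M] oU oV _ KM] UV by blast
  qed
qed



definition IL :: "(real \<Rightarrow> real) \<Rightarrow> (nat \<Rightarrow> real) \<Rightarrow> (nat \<Rightarrow> real) \<Rightarrow> (nat \<Rightarrow> real) set" where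
  "IL f a b = {x. \<forall>k. x k \<in> {a k..b k} \<and> f (x (Suc k)) = x k}"

definition ichain :: "(real \<Rightarrow> real) \<Rightarrow> (nat \<Rightarrow> real) \<Rightarrow> (nat \<Rightarrow> real) \<Rightarrow> bool" where
  "ichain f a b \<longleftrightarrow> (\<forall>k. 0 \<le> a k \<and> a k \<le> b k \<and> b k \<le> 1 \<and> f ` {a (Suc k)..b (Suc k)} = {a k..b k})"

lemma ichain_iter_in:
  assumes "ichain f a b" "p \<in> {a (k + j)..b (k + j)}"
  shows "(f ^^ j) p \<in> {a k..b k}"
  using assms(2)
proof (induction j arbitrary: p)
  case 0 then show ?case by simp
next
  case (Suc j)
  have "f p \<in> {a (k + j)..b (k + j)}"
    using Suc.prems assms(1) unfolding ichain_def by (metis add_Suc_right image_eqI)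
  then show ?case using Suc.IH by (simp add: funpow_Suc_right del: funpow.simps)
qed

lemma IL_iter:
  assumes "x \<in> IL f a b" "k \<le> m"
  shows "x k = (f ^^ (m - k)) (x m)"
  using assms(2)
proof (induction m)
  case 0 then show ?case by simp
next
  case (Suc m)
  show ?case
  proof (cases "k = Suc m")
    case True then show ?thesis by simp
  next
    case False
    then have "k \<le> m" using Suc.prems by simp
    then have "x k = (f ^^ (m - k)) (x m)" using Suc.IH by simp
    also have "x m = f (x (Suc m))" using assms(1) unfolding IL_def by auto
    also have "(f ^^ (m - k)) (f (x (Suc m))) = (f ^^ (Suc m - k)) (x (Suc m))"
      using \<open>k \<le> m\<close> by (simp add: Suc_diff_le funpow_Suc_right del: funpow.simps)
    finally show ?thesis .
  qed
qed

lemma IL_ext: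
  assumes ch: "ichain f a b" and p: "p \<in> {a m..b m}"
  shows "\<exists>x\<in>IL f a b. x m = p"
proof -
  define z where "z = rec_nat p (\<lambda>j zj. SOME q. q \<in> {a (Suc (m + j))..b (Suc (m + j))} \<and> f q = zj)"
  have z0: "z 0 = p" unfolding z_def by simp
  have zS: "z (Suc j) = (SOME q. q \<in> {a (Suc (m + j))..b (Suc (m + j))} \<and> f q = z j)" for j
    unfolding z_def by simp
  have zin: "z j \<in> {a (m + j)..b (m + j)} \<and> (j > 0 \<longrightarrow> f (z j) = z (j - 1))" for j
  proof (induction j)
    case 0 then show ?case using p z0 by simp
  next
    case (Suc j)
    then have "z j \<in> f ` {a (Suc (m + j))..b (Suc (m + j))}" using ch unfolding ichain_def by auto
    then have "\<exists>q. q \<in> {a (Suc (m + j))..b (Suc (m + j))} \<and> f q = z j" by auto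
    from someI_ex[OF this] show ?case unfolding zS by simp
  qed
  define x where "x k = (if m \<le> k then z (k - m) else (f ^^ (m - k)) p)" for k
  have "x \<in> IL f a b"
    unfolding IL_def
  proof (intro CollectI allI conjI)
    fix k
    show "x k \<in> {a k..b k}"
    proof (cases "m \<le> k")
      case True then show ?thesis using zin[of "k - m"] unfolding x_def by simp
    next
      case False
      then have "p \<in> {a (k + (m - k))..b (k + (m - k))}" using p by simp
      from ichain_iter_in[OF ch this] False show ?thesis unfolding x_def by simp
    qed
    show "f (x (Suc k)) = x k"
    proof (cases "m \<le> k")
      case True
      then have "Suc k - m = Suc (k - m)" by simp
      then show ?thesis using zin[of "Suc (k - m)"] True unfolding x_def by simp
    next
      case False
      show ?thesis
      proof (cases "Suc k = m")
        case True then show ?thesis unfolding x_def using z0 by (simp add: True[symmetric])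
      next
        case False
        then have "m - k = Suc (m - Suc k)" using \<open>\<not> m \<le> k\<close> by simp
        then show ?thesis unfolding x_def using False \<open>\<not> m \<le> k\<close> by simp
      qed
    qed
  qed
  moreover have "x m = p" unfolding x_def using z0 by simp
  ultimately show ?thesis by blast
qed

lemma IL_sub:
  assumes "ichain f a b" shows "IL f a b \<subseteq> inv_lim f"
  using assms unfolding IL_def ichain_def inv_lim_def
  by (auto intro: order_trans)

lemma IL_nonempty:
  assumes "ichain f a b" shows "IL f a b \<noteq> {}"
  using IL_ext[OF assms, of "a 0" 0] assms unfolding ichain_def by auto

lemma IL_nondeg:
  assumes "ichain f a b" "a m < b m" shows "nondegenerate (IL f a b)"
proof -
  obtain x where "x \<in> IL f a b" "x m = a m" using IL_ext[OF assms(1), of "a m" m] assms by auto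
  moreover obtain y where "y \<in> IL f a b" "y m = b m" using IL_ext[OF assms(1), of "b m" m] assms by auto
  ultimately show ?thesis unfolding nondegenerate_def using assms(2) by force
qed



lemma funpow_cont:
  fixes f :: "real \<Rightarrow> real"
  assumes "continuous_on {0..1::real} f" "f ` {0..1} \<subseteq> {0..1}"
  shows "continuous_on {0..1} (f ^^ j) \<and> (f ^^ j) ` {0..1} \<subseteq> {0..1}"
proof (induction j)
  case 0 then show ?case by (simp only: funpow.simps(1) continuous_on_id' image_id) simp
next
  case (Suc j)
  then have "continuous_on {0..1} (f \<circ> (f ^^ j))"
    using continuous_on_compose continuous_on_subset assms by blast
  then show ?case using Suc assms by (auto simp del: funpow.simps simp: funpow_Suc_right[symmetric] funpow.simps(2))
qed

lemma compact_PiE_real: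
  "compact (PiE UNIV (\<lambda>k::nat. {a k..b k::real}))"
proof -
  have "compactin (product_topology (\<lambda>k. euclidean) UNIV) (PiE UNIV (\<lambda>k::nat. {a k..b k::real}))"
    by (simp add: compactin_PiE)
  then show ?thesis by (simp add: euclidean_product_topology)
qed

lemma connected_PiE_real:
  "connected (PiE UNIV (\<lambda>k::nat. {a k..b k::real}))"
proof -
  have "connectedin (product_topology (\<lambda>k. euclidean) UNIV) (PiE UNIV (\<lambda>k::nat. {a k..b k::real}))"
    by (simp add: connectedin_PiE)
  then show ?thesis by (simp add: euclidean_product_topology)
qed

lemma IL_continuum:
  fixes f :: "real \<Rightarrow> real"
  assumes cf: "continuous_on {0..1::real} f" and ff: "f ` {0..1} \<subseteq> {0..1}" and ch: "ichain f a b"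
  shows "continuum (IL f a b)"
proof -
  define P where "P = PiE UNIV (\<lambda>k::nat. {a k..b k})"
  define K where "K M = {x. (\<forall>k. x k \<in> {a k..b k}) \<and> (\<forall>k<M. f (x (Suc k)) = x k)}" for M
  define \<phi> where "\<phi> M y = (\<lambda>k. if k < M then (f ^^ (M - k)) (y M) else y k)" for M and y :: "nat \<Rightarrow> real"
  have sub01: "{a k..b k} \<subseteq> {0..1}" for k using ch unfolding ichain_def by auto
  have cont: "continuous_on P (\<phi> M)" for M
  proof (rule continuous_on_coordinatewise_then_product)
    fix k
    show "continuous_on P (\<lambda>y. \<phi> M y k)"
    proof (cases "k < M")
      case True
      have c1: "continuous_on P (\<lambda>y. y M)"
        by (rule continuous_on_subset[OF continuous_on_product_coordinates]) simp
      have sP: "(\<lambda>y. y M) ` P \<subseteq> {0..1}" 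
      proof -
        { fix y assume "y \<in> P"
          then have "y M \<in> {a M..b M}" unfolding P_def by (simp add: PiE_iff)
          then have "y M \<in> {0..1}" using sub01[of M] by blast }
        then show ?thesis by blast
      qed
      have "continuous_on P ((f ^^ (M - k)) \<circ> (\<lambda>y. y M))"
        by (rule continuous_on_compose[OF c1 continuous_on_subset[OF conjunct1[OF funpow_cont[OF cf ff]] sP]])
      then show ?thesis using True unfolding \<phi>_def by (simp add: o_def)
    next
      case False
      have "(\<lambda>y. \<phi> M y k) = (\<lambda>y. y k)" using False unfolding \<phi>_def by auto
      moreover have "continuous_on P (\<lambda>y. y k)"
        by (rule continuous_on_subset[OF continuous_on_product_coordinates]) simp
      ultimately show ?thesis by (simp only:)
    qed
  qed
  have img: "\<phi> M ` P = K M" for M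
  proof
    show "\<phi> M ` P \<subseteq> K M"
    proof
      fix x assume "x \<in> \<phi> M ` P"
      then obtain y where y: "y \<in> P" "x = \<phi> M y" by auto
      have yM: "y M \<in> {a (k + (M - k))..b (k + (M - k))}" if "k < M" for k
        using y(1) that unfolding P_def by auto
      have "x k \<in> {a k..b k}" for k
      proof (cases "k < M")
        case True
        then show ?thesis using ichain_iter_in[OF ch yM[of k]] y(2) unfolding \<phi>_def by simp
      next
        case False
        then show ?thesis using y unfolding P_def \<phi>_def by (simp add: PiE_iff)
      qed
      moreover have "f (x (Suc k)) = x k" if "k < M" for k
      proof (cases "Suc k < M")
        case True
        then have "M - k = Suc (M - Suc k)" by simp
        then show ?thesis using y(2) True that unfolding \<phi>_def by simp
      next
        case False
        then have "M = Suc k" using that by simp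
        then show ?thesis using y(2) unfolding \<phi>_def by simp
      qed
      ultimately show "x \<in> K M" unfolding K_def by auto
    qed
    show "K M \<subseteq> \<phi> M ` P"
    proof
      fix x assume x: "x \<in> K M"
      have eq: "x k = (f ^^ (M - k)) (x M)" if "k \<le> M" for k
        using that
      proof (induction "M - k" arbitrary: k)
        case 0 then show ?case by simp
      next
        case (Suc d)
        have kM: "k < M" using Suc.hyps(2) by simp
        have "x (Suc k) = (f ^^ (M - Suc k)) (x M)" using Suc.hyps kM by simp
        moreover have "f (x (Suc k)) = x k" using x kM unfolding K_def by blast
        moreover have "M - k = Suc (M - Suc k)" using kM by simp
        ultimately show ?case by (metis comp_apply funpow.simps(2))
      qed
      have "\<phi> M x k = x k" for k
      proof (cases "k < M")
        case True
        then have "x k = (f ^^ (M - k)) (x M)" using eq[of k] by simp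
        then show ?thesis using True unfolding \<phi>_def by simp
      next
        case False
        then show ?thesis unfolding \<phi>_def by simp
      qed
      then have "\<phi> M x = x" by (rule ext)
      moreover have "x \<in> P" using x unfolding K_def P_def by auto
      ultimately show "x \<in> \<phi> M ` P" by (metis image_eqI)
    qed
  qed
  have compK: "compact (K M)" for M
  proof -
    have "compact (\<phi> M ` P)" by (rule compact_continuous_image[OF cont]) (simp add: P_def compact_PiE_real)
    then show ?thesis using img by simp
  qed
  have connK: "connected (K M)" for M
  proof -
    have "connected (\<phi> M ` P)" by (rule connected_continuous_image[OF cont]) (simp add: P_def connected_PiE_real)
    then show ?thesis using img by simp
  qed
  have decK: "K (Suc M) \<subseteq> K M" for M unfolding K_def by auto
  have ILeq: "IL f a b = \<Inter>(range K)" unfolding IL_def K_def by auto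
  have "connected (IL f a b)" using nested_connected[of K, OF compK connK decK] ILeq by simp
  moreover have "compact (IL f a b)"
  proof -
    have "IL f a b = K 0 \<inter> \<Inter>(range K)" using ILeq by auto
    moreover have "closed (\<Inter>(range K))" using compK compact_imp_closed by blast
    ultimately show ?thesis using compact_Int_closed compK by metis
  qed
  ultimately show ?thesis unfolding continuum_def using IL_nonempty[OF ch] by auto
qed



lemma lift1:
  fixes f :: "real \<Rightarrow> real"
  assumes cf: "continuous_on {u..v} f" and uv: "u \<le> v" and fu: "f u = c" and fv: "f v = d" and cd: "c \<le> d"
  shows "\<exists>c' d'. u \<le> c' \<and> c' \<le> d' \<and> d' \<le> v \<and> f ` {c'..d'} = {c..d}"
proof -
  define A where "A = {t \<in> {u..v}. f t = d}"
  have cA: "closed A" unfolding A_def by (rule continuous_closed_preimage_constant[OF cf]) simp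
  have vA: "v \<in> A" unfolding A_def using uv fv by simp
  have bA: "bdd_below A" unfolding A_def by (rule bdd_belowI[of _ u]) auto
  define d' where "d' = Inf A"
  have d'A: "d' \<in> A" unfolding d'_def using closed_contains_Inf[OF _ bA cA] vA by blast
  have d'le: "d' \<le> t" if "t \<in> A" for t unfolding d'_def using cInf_lower[OF that bA] .
  have ud': "u \<le> d'" "d' \<le> v" "f d' = d" using d'A unfolding A_def by auto
  define B where "B = {t \<in> {u..d'}. f t = c}"
  have cB: "closed B" unfolding B_def
    by (rule continuous_closed_preimage_constant[OF continuous_on_subset[OF cf]]) (use ud' in auto)
  have uB: "u \<in> B" unfolding B_def using ud' fu by simp
  have bB: "bdd_above B" unfolding B_def by (rule bdd_aboveI[of _ d']) auto
  define c' where "c' = Sup B"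
  have c'B: "c' \<in> B" unfolding c'_def using closed_contains_Sup[OF _ bB cB] uB by blast
  have lec': "t \<le> c'" if "t \<in> B" for t unfolding c'_def using cSup_upper[OF that bB] .
  have uc': "u \<le> c'" "c' \<le> d'" "f c' = c" using c'B unfolding B_def by auto
  have conn: "connected (f ` {p..q})" if "u \<le> p" "q \<le> v" for p q
    by (rule connected_continuous_image[OF continuous_on_subset[OF cf] connected_Icc]) (use that in auto)
  have "f ` {c'..d'} = {c..d}"
  proof
    show "{c..d} \<subseteq> f ` {c'..d'}"
      by (rule connected_contains_Icc[OF conn]) (use uc' ud' in auto)
    show "f ` {c'..d'} \<subseteq> {c..d}"
    proof
      fix y assume "y \<in> f ` {c'..d'}"
      then obtain t where t: "t \<in> {c'..d'}" "y = f t" by auto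
      have "\<not> f t > d"
      proof
        assume ft: "f t > d"
        then have "t \<noteq> d'" using ud' by auto
        have "{c..f t} \<subseteq> f ` {c'..t}"
          by (rule connected_contains_Icc[OF conn]) (use uc' ud' t in auto)
        then have "d \<in> f ` {c'..t}" using ft cd by auto
        then obtain s where s: "s \<in> {c'..t}" "f s = d" by auto
        then have "s \<in> A" unfolding A_def using uc' ud' t by auto
        then have "d' \<le> s" by (rule d'le)
        then show False using s t \<open>t \<noteq> d'\<close> by auto
      qed
      moreover have "\<not> f t < c"
      proof
        assume ft: "f t < c"
        then have "t \<noteq> c'" using uc' by auto
        have "{f t..d} \<subseteq> f ` {t..d'}"
          by (rule connected_contains_Icc[OF conn]) (use uc' ud' t in auto)
        then have "c \<in> f ` {t..d'}" using ft cd by auto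
        then obtain s where s: "s \<in> {t..d'}" "f s = c" by auto
        then have "s \<in> B" unfolding B_def using uc' ud' t by auto
        then have "s \<le> c'" by (rule lec')
        then show False using s t \<open>t \<noteq> c'\<close> by auto
      qed
      ultimately show "y \<in> {c..d}" using t by auto
    qed
  qed
  then show ?thesis using uc' ud' by blast
qed

lemma lift_interval:
  fixes f :: "real \<Rightarrow> real"
  assumes cf: "continuous_on {0..1} f" and sf: "f ` {0..1} = {0..1}"
    and c: "0 \<le> c" "c \<le> d" "d \<le> 1"
  shows "\<exists>c' d'. 0 \<le> c' \<and> c' \<le> d' \<and> d' \<le> 1 \<and> f ` {c'..d'} = {c..d}"
proof -
  obtain u where u: "u \<in> {0..1}" "f u = c" using sf c by (metis atLeastAtMost_iff imageE order_trans)
  obtain v where v: "v \<in> {0..1}" "f v = d" using sf c by (metis atLeastAtMost_iff imageE order_trans)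
  show ?thesis
  proof (cases "u \<le> v")
    case True
    have "continuous_on {u..v} f" by (rule continuous_on_subset[OF cf]) (use u v in auto)
    from lift1[OF this True u(2) v(2) c(2)] obtain c' d' where
      "u \<le> c'" "c' \<le> d'" "d' \<le> v" "f ` {c'..d'} = {c..d}" by blast
    then show ?thesis using u v by (intro exI[of _ c'] exI[of _ d']) auto
  next
    case False
    define g where "g x = f (1 - x)" for x
    have "continuous_on {1-u..1-v} g" unfolding g_def
      by (rule continuous_on_compose2[OF cf]) (use u v in \<open>auto intro!: continuous_intros\<close>)
    from lift1[OF this _ _ _ c(2)] obtain c' d' where
      cd': "1 - u \<le> c'" "c' \<le> d'" "d' \<le> 1 - v" "g ` {c'..d'} = {c..d}"
      using False u v unfolding g_def by auto
    have "g ` {c'..d'} = f ` ((\<lambda>x. 1 - x) ` {c'..d'})" unfolding g_def by (simp only: image_image)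
    also have "(\<lambda>x. 1 - x) ` {c'..d'} = {1 - d'..1 - c'}"
      using image_diff_atLeastAtMost[of "1::real" c' d'] by simp
    finally have "f ` {1 - d'..1 - c'} = {c..d}" using cd' by simp
    then show ?thesis using cd' u v by (intro exI[of _ "1 - d'"] exI[of _ "1 - c'"]) auto
  qed
qed

lemma chain_from:
  fixes f :: "real \<Rightarrow> real"
  assumes cf: "continuous_on {0..1} f" and sf: "f ` {0..1} = {0..1}"
    and c: "0 \<le> c" "c \<le> d" "d \<le> 1"
  shows "\<exists>a b. ichain f a b \<and> a 0 = c \<and> b 0 = d"
proof -
  define P where "P p q \<longleftrightarrow> 0 \<le> fst q \<and> fst q \<le> snd q \<and> snd q \<le> 1 \<and> f ` {fst q..snd q} = {fst p..snd p}"
    for p q :: "real \<times> real"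
  define step where "step p = (SOME q. P p q)" for p
  have stepP: "P p (step p)" if pp: "0 \<le> fst p" "fst p \<le> snd p" "snd p \<le> 1" for p
  proof -
    obtain c' d' where "0 \<le> c' \<and> c' \<le> d' \<and> d' \<le> 1 \<and> f ` {c'..d'} = {fst p..snd p}"
      using lift_interval[OF cf sf pp] by blast
    then have "P p (c', d')" unfolding P_def by simp
    then show ?thesis unfolding step_def by (rule someI)
  qed
  define z where "z n = (step ^^ n) (c, d)" for n
  have zS: "z (Suc n) = step (z n)" for n unfolding z_def by simp
  have inv: "0 \<le> fst (z n) \<and> fst (z n) \<le> snd (z n) \<and> snd (z n) \<le> 1" for n
  proof (induction n)
    case 0 then show ?case using c unfolding z_def by simp
  next
    case (Suc n) then show ?case using stepP[of "z n"] unfolding zS P_def by blast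
  qed
  have "ichain f (\<lambda>n. fst (z n)) (\<lambda>n. snd (z n))"
    unfolding ichain_def
  proof
    fix k
    show "0 \<le> fst (z k) \<and> fst (z k) \<le> snd (z k) \<and> snd (z k) \<le> 1 \<and>
          f ` {fst (z (Suc k))..snd (z (Suc k))} = {fst (z k)..snd (z k)}"
      using inv[of k] stepP[of "z k"] unfolding zS P_def by blast
  qed
  moreover have "fst (z 0) = c" "snd (z 0) = d" unfolding z_def by simp_all
  ultimately show ?thesis by blast
qed

lemma IL_agree:
  assumes ch1: "ichain f a b" and ch2: "ichain f a' b'" and n: "n \<ge> 1"
    and eq: "\<forall>k<n. a k = a' k \<and> b k = b' k" and x: "x \<in> IL f a b"
  shows "\<exists>y\<in>IL f a' b'. \<forall>k<n. y k = x k"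
proof -
  have "x (n-1) \<in> {a (n-1)..b (n-1)}" using x unfolding IL_def by blast
  then have "x (n-1) \<in> {a' (n-1)..b' (n-1)}" using eq n by simp
  also have "{a' (n-1)..b' (n-1)} = f ` {a' n..b' n}"
    using ch2 n unfolding ichain_def by (metis Suc_diff_1 less_le_trans zero_less_one)
  finally obtain q where q: "q \<in> {a' n..b' n}" "f q = x (n-1)" by auto
  obtain y where y: "y \<in> IL f a' b'" "y n = q" using IL_ext[OF ch2 q(1)] by blast
  have "y (n-1) = f (y (Suc (n-1)))" using y(1) unfolding IL_def by simp
  then have yn1: "y (n-1) = x (n-1)" using y(2) q(2) n by simp
  have "y k = x k" if "k < n" for k
  proof -
    have "y k = (f ^^ (n - 1 - k)) (y (n-1))" using IL_iter[OF y(1), of k "n-1"] that by simp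
    also have "\<dots> = (f ^^ (n - 1 - k)) (x (n-1))" using yn1 by simp
    also have "\<dots> = x k" using IL_iter[OF x, of k "n-1"] that by simp
    finally show ?thesis .
  qed
  then show ?thesis using y(1) by blast
qed

lemma dist_agree:
  "\<exists>n0. \<forall>n\<ge>n0. \<forall>x y :: nat \<Rightarrow> real. (\<forall>k<n. x k = y k) \<longrightarrow> dist x y \<le> (1/2)^N"
proof -
  define n0 where "n0 = Suc (Max ((from_nat :: nat \<Rightarrow> nat) ` {..N}))"
  have lt: "(from_nat m :: nat) < n0" if "m \<le> N" for m
    unfolding n0_def using that by (simp add: le_imp_less_Suc)
  have "dist x y \<le> (1/2)^N" if "n \<ge> n0" "\<forall>k<n. x k = y k" for n and x y :: "nat \<Rightarrow> real"
  proof -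
    have "{dist (x (from_nat m)) (y (from_nat m)) |m. m \<le> N} = {0}"
    proof -
      have "x (from_nat m) = y (from_nat m)" if "m \<le> N" for m
        using lt[OF that] \<open>n \<ge> n0\<close> \<open>\<forall>k<n. x k = y k\<close> by simp
      then show ?thesis by (auto intro!: exI[of _ 0])
    qed
    then show ?thesis using dist_fun_le_dist_first_terms[of x y N] by simp
  qed
  then show ?thesis by blast
qed

lemma hausdist_le:
  fixes S T :: "'a::metric_space set"
  assumes "S \<noteq> {}" "T \<noteq> {}" "bounded S" "bounded T"
    and h1: "\<forall>x\<in>S. \<exists>y\<in>T. dist x y \<le> e" and h2: "\<forall>y\<in>T. \<exists>x\<in>S. dist y x \<le> e"
  shows "0 \<le> hausdist S T \<and> hausdist S T \<le> e"
proof -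
  have i1: "infdist x T \<le> e" if "x \<in> S" for x
    using h1 that infdist_le order_trans by metis
  have i2: "infdist y S \<le> e" if "y \<in> T" for y
    using h2 that infdist_le order_trans by metis
  have b1: "bdd_above ((\<lambda>x. infdist x T) ` S)" by (rule bdd_aboveI2[where M=e]) (rule i1)
  have b2: "bdd_above ((\<lambda>x. infdist x S) ` T)" by (rule bdd_aboveI2[where M=e]) (rule i2)
  have s1: "(SUP x\<in>S. infdist x T) \<le> e" using i1 by (intro cSUP_least[OF assms(1)]) auto
  have s2: "(SUP x\<in>T. infdist x S) \<le> e" using i2 by (intro cSUP_least[OF assms(2)]) auto
  obtain x0 where "x0 \<in> S" using assms(1) by auto
  have "0 \<le> infdist x0 T" by (rule infdist_nonneg)
  also have "\<dots> \<le> (SUP x\<in>S. infdist x T)" by (rule cSUP_upper[OF \<open>x0 \<in> S\<close> b1])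
  finally have s0: "0 \<le> (SUP x\<in>S. infdist x T)" .
  show ?thesis unfolding hausdist_def using assms s0 s1 s2 by auto
qed



theorem lemma4p6:
  fixes f :: "real \<Rightarrow> real"
  assumes "continuous_on {0..1} f"
    and "f ` {0..1} = {0..1}"
    and "admits_splitting f"
  shows "\<exists>(C :: (nat \<Rightarrow> real) set) (Cs :: nat \<Rightarrow> (nat \<Rightarrow> real) set).
           continuum C \<and> nondegenerate C \<and> C \<subseteq> inv_lim f \<and>
           (\<forall>n. continuum (Cs n) \<and> nondegenerate (Cs n) \<and> Cs n \<subseteq> inv_lim f \<and> Cs n \<noteq> C) \<and>
           (\<lambda>n. hausdist (Cs n) C) \<longlonglongrightarrow> 0"
proof -
  note cf = assms(1) and sf = assms(2)
  have ff: "f ` {0..1} \<subseteq> {0..1}" using sf by simp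
  obtain l r where sp: "splitting_seq f l r" using assms(3) unfolding admits_splitting_def by blast
  then have tg: "tight_seq f l r" unfolding splitting_seq_def by blast
  then obtain N0 where N0: "\<forall>n\<ge>N0. l n < r n" unfolding tight_seq_def by blast
  have chT: "ichain f l r" using tg unfolding tight_seq_def ichain_def by blast
  obtain NN sa sb where NN: "infinite NN" and sab: "\<forall>n\<in>NN. 0 \<le> sa n \<and> sa n < sb n \<and> sb n \<le> 1 \<and>
        {sa n..sb n} \<inter> {l n..r n} \<subseteq> {l n, r n} \<and> f ` {sa n..sb n} = f ` {l n..r n}"
    using sp unfolding splitting_seq_def by blast
  define C where "C = IL f l r"
  have C1: "continuum C" unfolding C_def by (rule IL_continuum[OF cf ff chT])
  have C2: "nondegenerate C" unfolding C_def by (rule IL_nondeg[OF chT, of N0]) (use N0 in auto)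
  have C3: "C \<subseteq> inv_lim f" unfolding C_def by (rule IL_sub[OF chT])
  define \<nu> where "\<nu> j = (SOME n. n \<in> NN \<and> j < n)" for j
  have \<nu>: "\<nu> j \<in> NN \<and> j < \<nu> j" for j
  proof -
    have "\<exists>n. n \<in> NN \<and> j < n" using NN unfolding infinite_nat_iff_unbounded by blast
    then show ?thesis unfolding \<nu>_def by (rule someI_ex)
  qed
  have "\<forall>j. \<exists>p. ichain f (fst p) (snd p) \<and> fst p 0 = sa (\<nu> j) \<and> snd p 0 = sb (\<nu> j)"
  proof
    fix j
    have "0 \<le> sa (\<nu> j)" "sa (\<nu> j) \<le> sb (\<nu> j)" "sb (\<nu> j) \<le> 1" using sab \<nu>[of j] by auto
    from chain_from[OF cf sf this] obtain a b where "ichain f a b" "a 0 = sa (\<nu> j)" "b 0 = sb (\<nu> j)"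
      by blast
    then show "\<exists>p. ichain f (fst p) (snd p) \<and> fst p 0 = sa (\<nu> j) \<and> snd p 0 = sb (\<nu> j)"
      by (intro exI[of _ "(a, b)"]) simp
  qed
  then obtain AB where AB: "\<And>j. ichain f (fst (AB j)) (snd (AB j)) \<and> fst (AB j) 0 = sa (\<nu> j) \<and> snd (AB j) 0 = sb (\<nu> j)"
    using choice[of "\<lambda>j p. ichain f (fst p) (snd p) \<and> fst p 0 = sa (\<nu> j) \<and> snd p 0 = sb (\<nu> j)"] by blast
  define A where "A j k = (if k < \<nu> j then l k else fst (AB j) (k - \<nu> j))" for j k
  define B where "B j k = (if k < \<nu> j then r k else snd (AB j) (k - \<nu> j))" for j k
  have chA: "ichain f (A j) (B j)" for j
    unfolding ichain_def
  proof
    fix k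
    let ?n = "\<nu> j"
    have chj: "ichain f (fst (AB j)) (snd (AB j))" using AB by blast
    show "0 \<le> A j k \<and> A j k \<le> B j k \<and> B j k \<le> 1 \<and> f ` {A j (Suc k)..B j (Suc k)} = {A j k..B j k}"
    proof (cases "Suc k < ?n")
      case True
      then show ?thesis using chT unfolding A_def B_def ichain_def by simp
    next
      case False
      show ?thesis
      proof (cases "Suc k = ?n")
        case True
        then have k: "k < ?n" "\<not> Suc k < ?n" "Suc k - ?n = 0" by simp_all
        have "f ` {A j (Suc k)..B j (Suc k)} = f ` {sa ?n..sb ?n}"
          unfolding A_def B_def using k AB[of j] by simp
        also have "\<dots> = f ` {l ?n..r ?n}" using sab \<nu>[of j] by blast
        also have "\<dots> = {l k..r k}" using chT True unfolding ichain_def by metis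
        finally show ?thesis using chT k unfolding A_def B_def ichain_def by simp
      next
        case False
        then have k: "\<not> k < ?n" "\<not> Suc k < ?n" "Suc k - ?n = Suc (k - ?n)"
          using \<open>\<not> Suc k < ?n\<close> by simp_all
        show ?thesis using chj k unfolding A_def B_def ichain_def by simp
      qed
    qed
  qed
  define Cs where "Cs j = IL f (A j) (B j)" for j
  have agreeAB: "\<forall>k<\<nu> j. l k = A j k \<and> r k = B j k" for j unfolding A_def B_def by simp
  have \<nu>1: "\<nu> j \<ge> 1" for j using \<nu>[of j] by simp
  have Cs: "continuum (Cs j) \<and> nondegenerate (Cs j) \<and> Cs j \<subseteq> inv_lim f \<and> Cs j \<noteq> C" for j
  proof (intro conjI)
    let ?n = "\<nu> j"
    have An: "A j ?n = sa ?n" "B j ?n = sb ?n" unfolding A_def B_def using AB[of j] by simp_all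
    show "continuum (Cs j)" unfolding Cs_def by (rule IL_continuum[OF cf ff chA])
    show "nondegenerate (Cs j)" unfolding Cs_def
      by (rule IL_nondeg[OF chA, of _ ?n]) (use An sab \<nu>[of j] in auto)
    show "Cs j \<subseteq> inv_lim f" unfolding Cs_def by (rule IL_sub[OF chA])
    have s: "sa ?n < sb ?n" "{sa ?n..sb ?n} \<inter> {l ?n..r ?n} \<subseteq> {l ?n, r ?n}" using sab \<nu>[of j] by auto
    have "\<exists>p\<in>{sa ?n..sb ?n}. p \<notin> {l ?n..r ?n}"
    proof (rule ccontr)
      assume na: "\<not> (\<exists>p\<in>{sa ?n..sb ?n}. p \<notin> {l ?n..r ?n})"
      have mem: "q \<in> {l ?n, r ?n}" if "q \<in> {sa ?n..sb ?n}" for q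
        using na that s(2) by blast
      have "sa ?n \<in> {l ?n, r ?n}" by (rule mem) (use s(1) in simp)
      moreover have "(sa ?n + sb ?n) / 2 \<in> {l ?n, r ?n}" by (rule mem) (use s(1) in simp)
      moreover have "sb ?n \<in> {l ?n, r ?n}" by (rule mem) (use s(1) in simp)
      ultimately show False using s(1) by auto
    qed
    then obtain p where p: "p \<in> {A j ?n..B j ?n}" "p \<notin> {l ?n..r ?n}" using An by auto
    obtain y where y: "y \<in> Cs j" "y ?n = p" using IL_ext[OF chA p(1)] unfolding Cs_def by blast
    have "y \<notin> C" using y p(2) unfolding C_def IL_def by auto
    then show "Cs j \<noteq> C" using y(1) by blast
  qed
  have lim: "(\<lambda>j. hausdist (Cs j) C) \<longlonglongrightarrow> 0"
  proof (rule LIMSEQ_I)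
    fix e :: real assume "0 < e"
    then obtain N where N: "(1/2)^N < e" using real_arch_pow_inv[of e "1/2"] by auto
    obtain n0 where n0: "\<forall>n\<ge>n0. \<forall>x y :: nat \<Rightarrow> real. (\<forall>k<n. x k = y k) \<longrightarrow> dist x y \<le> (1/2)^N"
      using dist_agree[of N] by blast
    have "norm (hausdist (Cs j) C - 0) < e" if "j \<ge> n0" for j
    proof -
      have big: "\<nu> j \<ge> n0" using \<nu>[of j] that by simp
      have h1: "\<forall>x\<in>Cs j. \<exists>y\<in>C. dist x y \<le> (1/2)^N"
      proof
        fix x assume "x \<in> Cs j"
        then obtain y where "y \<in> C" "\<forall>k<\<nu> j. y k = x k"
          using IL_agree[OF chA chT \<nu>1[of j]] agreeAB[of j] unfolding Cs_def C_def by metis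
        then show "\<exists>y\<in>C. dist x y \<le> (1/2)^N" using n0 big by (metis dist_commute)
      qed
      have h2: "\<forall>y\<in>C. \<exists>x\<in>Cs j. dist y x \<le> (1/2)^N"
      proof
        fix y assume "y \<in> C"
        then obtain x where "x \<in> Cs j" "\<forall>k<\<nu> j. x k = y k"
          using IL_agree[OF chT chA \<nu>1[of j]] agreeAB[of j] unfolding Cs_def C_def by metis
        then show "\<exists>x\<in>Cs j. dist y x \<le> (1/2)^N" using n0 big by (metis dist_commute)
      qed
      have ne: "Cs j \<noteq> {}" "C \<noteq> {}" using Cs[of j] C1 unfolding continuum_def by auto
      have bd: "bounded (Cs j)" "bounded C" using Cs[of j] C1 unfolding continuum_def
        by (auto intro: compact_imp_bounded)
      from hausdist_le[OF ne bd h1 h2] N show ?thesis by simp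
    qed
    then show "\<exists>no. \<forall>j\<ge>no. norm (hausdist (Cs j) C - 0) < e" by blast
  qed
  show ?thesis using C1 C2 C3 Cs lim by blast
qed


end
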